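(* Let $Q>0$ and let $\gamma_-$ be the smaller root of $t-\log t=Q+1$. Let $w(t)=\frac{1}{\gamma_-}t^{\frac{1-\gamma_-}{\gamma_-}}$ on $I=[0,1]$. Then $[w]_{RH_1,[0,1]}=Q$ and $$\langle w\rangle_I\,e^{-\langle\log w\rangle_I}=\gamma_-\exp\Big(\frac{1-\gamma_-}{\gamma_-}\Big).$$
   Context: $\langle f\rangle_J=\frac1{|J|}\int_J f$. For a weight $w$ on $[0,1]$, $[w]_{RH_1,[0,1]}=\sup_{J\subset[0,1]}\Big\langle \frac{w}{\langle w\rangle_J}\log\frac{w}{\langle w\rangle_J}\Big\rangle_J$, supremum over subintervals $J$. *)

theory Defs
  imports "HOL-Analysis.Analysis"
begin

definition avg :: "(real \<Rightarrow> real) \<Rightarrow> real \<Rightarrow> real \<Rightarrow> real" where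
  "avg f a b = (LINT x:{a..b}|lborel. f x) / (b - a)"

definition RH1_01 :: "(real \<Rightarrow> real) \<Rightarrow> ereal" where
  "RH1_01 w = (SUP ab \<in> {(a,b). 0 \<le> a \<and> a < b \<and> b \<le> 1}.
      ereal (avg (\<lambda>x. w x / avg w (fst ab) (snd ab) * ln (w x / avg w (fst ab) (snd ab)))
                 (fst ab) (snd ab)))"

end

theory Submission
  imports Defs "HOL-Real_Asymp.Real_Asymp"
begin

lemma ftc_Ioo:
  fixes f F :: "real \<Rightarrow> real" and a b :: real
  assumes ab: "a < b"
  and D: "\<And>x. a < x \<Longrightarrow> x < b \<Longrightarrow> DERIV F x :> f x"
  and C: "\<And>x. a < x \<Longrightarrow> x < b \<Longrightarrow> isCont f x"
  and N: "\<And>x. a < x \<Longrightarrow> x < b \<Longrightarrow> 0 \<le> f x"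
  and A: "(F \<longlongrightarrow> F a) (at_right a)" and B: "(F \<longlongrightarrow> F b) (at_left b)"
  shows "set_integrable lborel {a<..<b} f" "(LINT x:{a<..<b}|lborel. f x) = F b - F a"
proof -
  have ab': "ereal a < ereal b" using ab by simp
  have r: "set_integrable lborel (einterval (ereal a) (ereal b)) f \<and>
      (LBINT x=ereal a..ereal b. f x) = F b - F a"
    apply (rule conjI)
    apply (rule interval_integral_FTC_nonneg(1)[OF ab', where F=F])
    using D C N A B by (auto intro!: interval_integral_FTC_nonneg(2)[OF ab'] simp: ereal_tendsto_simps1)
  then show "set_integrable lborel {a<..<b} f" by simp
  have "(LBINT x=ereal a..ereal b. f x) = (LINT x:{a<..<b}|lborel. f x)"
    using ab by (subst interval_integral_Ioo) auto
  then show "(LINT x:{a<..<b}|lborel. f x) = F b - F a" using r by simp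
qed

lemma Icc_Ioo:
  fixes f :: "real \<Rightarrow> real"
  shows "(LINT x:{a..b}|lborel. f x) = (LINT x:{a<..<b}|lborel. f x)"
  by (rule set_integral_discrete_difference[where X="{a,b}"]) auto

lemma isCont_right: "isCont F (a::real) \<Longrightarrow> (F \<longlongrightarrow> F a) (at_right a)"
  by (simp add: isCont_def filterlim_at_split)
lemma isCont_left: "isCont F (a::real) \<Longrightarrow> (F \<longlongrightarrow> F a) (at_left a)"
  by (simp add: isCont_def filterlim_at_split)

lemma int_pow:
  fixes p a b :: real
  assumes p: "p > 0" and a: "0 \<le> a" and ab: "a < b"
  shows "set_integrable lborel {a<..<b} (\<lambda>x. (p+1) * x powr p)"
    "(LINT x:{a<..<b}|lborel. (p+1) * x powr p) = b powr (p+1) - a powr (p+1)"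
proof -
  have D: "DERIV (\<lambda>x. x powr (p+1)) x :> (p+1) * x powr p" if "0 < x" for x
    using has_real_derivative_powr[OF that, of "p+1"] by simp
  have C: "isCont (\<lambda>x. x powr (p+1)) x" if "0 < x" for x
    using D[OF that] DERIV_isCont by blast
  have A: "((\<lambda>x. x powr (p+1)) \<longlongrightarrow> a powr (p+1)) (at_right a)"
  proof (cases "a = 0")
    case True
    have "((\<lambda>x. x powr (p+1)) \<longlongrightarrow> 0) (at_right 0)" using p by real_asymp
    then show ?thesis using True by simp
  next
    case False then show ?thesis using a by (intro isCont_right C) auto
  qed
  have B: "((\<lambda>x. x powr (p+1)) \<longlongrightarrow> b powr (p+1)) (at_left b)"
    using a ab by (intro isCont_left C) auto
  have c: "isCont (\<lambda>x. (p+1) * x powr p) x" if "a < x" "x < b" for x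
    using that a by (auto intro!: continuous_intros)
  have n: "0 \<le> (p+1) * x powr p" if "a < x" "x < b" for x
    using p by simp
  note r = ftc_Ioo[where F="\<lambda>x. x powr (p+1)" and f="\<lambda>x. (p+1) * x powr p", OF ab D c n A B]
  show "set_integrable lborel {a<..<b} (\<lambda>x. (p+1) * x powr p)"
    "(LINT x:{a<..<b}|lborel. (p+1) * x powr p) = b powr (p+1) - a powr (p+1)"
    using a r by auto
qed

lemma int_powln:
  fixes p a b :: real
  assumes p: "p > 0" and a: "0 \<le> a" and ab: "a < b" and b: "b \<le> 1"
  shows "set_integrable lborel {a<..<b} (\<lambda>x. x powr p * ln x)"
    "(LINT x:{a<..<b}|lborel. x powr p * ln x) =
       (b powr (p+1) * ln b / (p+1) - b powr (p+1) / (p+1)^2)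
     - (a powr (p+1) * ln a / (p+1) - a powr (p+1) / (p+1)^2)"
proof -
  define G where "G x = -(x powr (p+1) * ln x / (p+1) - x powr (p+1) / (p+1)^2)" for x
  have D: "DERIV G x :> - (x powr p * ln x)" if "0 < x" for x
  proof -
    have e: "x powr (p+1) = x * x powr p" using that by (simp add: powr_add)
    have e2: "x powr (1+p) = x * x powr p" using that by (simp add: powr_add)
    have pp: "1 + (p*p+p*2) \<noteq> 0" using p by (smt (verit) mult_pos_pos)
    have d1: "DERIV (\<lambda>x. x powr (p+1)) x :> (p+1) * x powr p"
      using has_real_derivative_powr[OF that, of "p+1"] by simp
    have d2: "DERIV (\<lambda>x. x powr (p+1) * ln x) x :> (p+1) * x powr p * ln x + (1/x) * x powr (p+1)"
      by (rule DERIV_mult[OF d1 DERIV_ln_divide[OF that]])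
    have d3: "DERIV G x :> - (((p+1) * x powr p * ln x + (1/x) * x powr (p+1)) / (p+1) - (p+1) * x powr p / (p+1)^2)"
      unfolding G_def by (intro DERIV_minus DERIV_diff DERIV_cdivide d1 d2)
    show ?thesis
      apply (rule DERIV_cong[OF d3])
    proof -
      have h1: "(1/x) * x powr (p+1) = x powr p" using e that by simp
      have h2: "(p+1) * x powr p / (p+1)^2 = x powr p / (p+1)" using p by (simp add: power2_eq_square)
      have h3: "((p+1) * x powr p * ln x + x powr p) / (p+1) = x powr p * ln x + x powr p / (p+1)"
        using p by (simp add: add_divide_distrib)
      show "- (((p+1) * x powr p * ln x + (1/x) * x powr (p+1)) / (p+1) - (p+1) * x powr p / (p+1)^2) = - (x powr p * ln x)"
        unfolding h1 h2 h3 by simp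
    qed
  qed
  have C: "isCont G x" if "0 < x" for x
    using D[OF that] DERIV_isCont by blast
  have G0: "(G \<longlongrightarrow> 0) (at_right 0)" unfolding G_def using p by real_asymp
  have A: "(G \<longlongrightarrow> G a) (at_right a)"
  proof (cases "a = 0")
    case True then show ?thesis using G0 by (simp add: G_def)
  next
    case False then show ?thesis using a by (intro isCont_right C) auto
  qed
  have B: "(G \<longlongrightarrow> G b) (at_left b)"
    using a ab by (intro isCont_left C) auto
  have N: "0 \<le> - (x powr p * ln x)" if "a < x" "x < b" for x
  proof -
    have "ln x \<le> 0" using that a b by simp
    then show ?thesis by (simp add: mult_nonneg_nonpos)
  qed
  have c: "isCont (\<lambda>x. - (x powr p * ln x)) x" if "a < x" "x < b" for x
    using that a by (auto intro!: continuous_intros)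
  have D': "DERIV G x :> - (x powr p * ln x)" if "a < x" "x < b" for x
    using D that a by auto
  note i = ftc_Ioo[where F=G, OF ab D' c N A B]
  have i2: "set_integrable lborel {a<..<b} (\<lambda>x. (-1) * (- (x powr p * ln x)))"
    using i(1) by (rule set_integrable_mult_right)
  then show "set_integrable lborel {a<..<b} (\<lambda>x. x powr p * ln x)" by simp
  then show "(LINT x:{a<..<b}|lborel. x powr p * ln x) =
       (b powr (p+1) * ln b / (p+1) - b powr (p+1) / (p+1)^2)
     - (a powr (p+1) * ln a / (p+1) - a powr (p+1) / (p+1)^2)"
    using i(2) set_integral_uminus[of lborel "{a<..<b}" "\<lambda>x. x powr p * ln x"]
    by (simp add: G_def)
qed

lemma int_ln:
  shows "set_integrable lborel {0<..<1} (\<lambda>x::real. ln x)"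
    "(LINT x:{0<..<1}|lborel. ln (x::real)) = -1"
proof -
  define G where "G x = x - x * ln x" for x :: real
  have D: "DERIV G x :> - ln x" if "0 < x" for x
    unfolding G_def using that
    by (auto intro!: derivative_eq_intros)
  have C: "isCont G x" if "0 < x" for x
    using D[OF that] DERIV_isCont by blast
  have A: "(G \<longlongrightarrow> G 0) (at_right 0)" unfolding G_def by real_asymp
  have B: "(G \<longlongrightarrow> G 1) (at_left 1)" by (intro isCont_left C) auto
  have c: "isCont (\<lambda>x. - ln x) x" if "0 < x" "x < 1" for x :: real
    using isCont_ln[where x=x] that by (auto intro!: isCont_minus)
  have n: "0 \<le> - ln x" if "0 < x" "x < 1" for x :: real
    using that by simp
  note i = ftc_Ioo[where F=G, OF _ D c n A B, simplified]
  have i2: "set_integrable lborel {0<..<1} (\<lambda>x::real. (-1) * (- ln x))"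
    using i(1) by (rule set_integrable_mult_right)
  then have ii: "set_integrable lborel {0<..<1} (\<lambda>x::real. ln x)" by simp
  then show "set_integrable lborel {0<..<1} (\<lambda>x::real. ln x)" .
  show "(LINT x:{0<..<1}|lborel. ln (x::real)) = -1"
    using i(2) set_integral_uminus[OF ii]
    by (simp add: G_def)
qed

lemma int_one:
  shows "set_integrable lborel {0<..<1} (\<lambda>x::real. 1::real)"
    "(LINT x:{0<..<(1::real)}|lborel. (1::real)) = 1"
proof -
  have D: "DERIV (\<lambda>x. x) x :> 1" if "0 < x" "x < 1" for x :: real
    by (rule DERIV_ident)
  have c: "isCont (\<lambda>x::real. 1::real) x" for x :: real by simp
  have A: "((\<lambda>x::real. x) \<longlongrightarrow> 0) (at_right 0)" by (intro tendsto_intros)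
  have B: "((\<lambda>x::real. x) \<longlongrightarrow> 1) (at_left 1)" by (intro tendsto_intros)
  note i = ftc_Ioo[where F="\<lambda>x. x" and f="\<lambda>x. 1", OF _ D c _ A B]
  show "set_integrable lborel {0<..<1} (\<lambda>x::real. 1::real)"
    "(LINT x:{0<..<(1::real)}|lborel. (1::real)) = 1" using i by auto
qed

lemma logsum:
  fixes x1 x2 s1 s2 :: real
  assumes "x1 > 0" "x2 > 0" "s1 > 0" "s2 > 0"
  shows "(x1+x2) * ln ((x1+x2)/(s1+s2)) \<le> x1 * ln (x1/s1) + x2 * ln (x2/s2)"
proof -
  define X where "X = x1 + x2"
  define S where "S = s1 + s2"
  have XS: "X > 0" "S > 0" using assms by (auto simp: X_def S_def)
  have h: "x * ln (x/s) - x * ln (X/S) \<ge> x - s * X / S" if "x > 0" "s > 0" for x s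
  proof -
    have y: "s * X / (x * S) > 0" using that XS by simp
    have "ln (s * X / (x * S)) \<le> s * X / (x * S) - 1" by (rule ln_le_minus_one[OF y])
    moreover have "ln (s * X / (x * S)) = ln (X/S) - ln (x/s)"
      using that XS by (simp add: ln_div ln_mult)
    ultimately have "ln (x/s) - ln (X/S) \<ge> 1 - s * X / (x * S)" by linarith
    then have "x * (ln (x/s) - ln (X/S)) \<ge> x * (1 - s * X / (x * S))"
      using that by (intro mult_left_mono) auto
    moreover have "x * (1 - s * X / (x * S)) = x - s * X / S" using that XS by (simp add: field_simps)
    ultimately show ?thesis by (simp add: right_diff_distrib)
  qed
  note h1 = h[OF assms(1) assms(3)] and h2 = h[OF assms(2) assms(4)]
  have "s1 * X / S + s2 * X / S = (s1 + s2) * X / S" by (simp add: add_divide_distrib distrib_right)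
  also have "\<dots> = X" using XS by (simp add: S_def)
  finally have "s1 * X / S + s2 * X / S = X" .
  then show ?thesis using h1 h2 unfolding X_def[symmetric] S_def[symmetric]
    by (simp add: X_def distrib_right)
qed

lemma alg_value:
  fixes D h p lq lm E :: real
  assumes "D > 0" "h > 0" "p > 0"
  shows "((lq - lm)/(D/h) * D + (p+1)*p/(D/h) * (E/(p+1) - D/(p+1)^2))/h
         = lq - p/(p+1) + (p*E - D*lm)/D"
proof -
  have g: "((lq - lm)/(D/h) * D + q*p/(D/h) * (E/q - D/q^2))/h = lq - p/q + (p*E - D*lm)/D"
    if "q > 0" for q :: real
    using assms that by (simp add: field_simps power2_eq_square)
  show ?thesis using g[of "p+1"] assms by simp
qed

lemma value_eq:
  fixes p a b :: real
  assumes p: "p > 0" and a: "0 \<le> a" and ab: "a < b" and b: "b \<le> 1"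
  defines "w \<equiv> \<lambda>t. (p+1) * t powr p"
  shows "avg (\<lambda>x. w x / avg w a b * ln (w x / avg w a b)) a b =
    ln (p+1) - p/(p+1) + (p*(b powr (p+1) * ln b - a powr (p+1) * ln a)
      - (b powr (p+1) - a powr (p+1)) * ln ((b powr (p+1) - a powr (p+1))/(b-a)))
      / (b powr (p+1) - a powr (p+1))"
proof -
  define A where "A = a powr (p+1)"
  define B where "B = b powr (p+1)"
  define D where "D = B - A"
  define h where "h = b - a"
  define m where "m = D / h"
  have AB: "A < B" unfolding A_def B_def using p a ab by (intro powr_less_mono2) auto
  have Dp: "D > 0" and hp: "h > 0" using AB ab by (auto simp: D_def h_def)
  have mp: "m > 0" using Dp hp by (simp add: m_def)
  have avgw: "avg w a b = m"
    unfolding avg_def Icc_Ioo w_def using int_pow(2)[OF p a ab]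
    by (simp add: m_def D_def h_def A_def B_def)
  define c1 where "c1 = (ln (p+1) - ln m) / m"
  define c2 where "c2 = (p+1) * p / m"
  define E where "E = B * ln b - A * ln a"
  have pt: "w x / m * ln (w x / m) = c1 * ((p+1) * x powr p) + c2 * (x powr p * ln x)"
    if "x \<in> {a<..<b}" for x
  proof -
    have x: "x > 0" using that a by auto
    have L: "ln ((p+1) * x powr p / m) = ln (p+1) + p * ln x - ln m"
      using x p mp by (simp add: ln_div ln_mult ln_powr)
    show ?thesis unfolding c1_def c2_def w_def L using mp
      by (simp add: field_simps)
  qed
  have "(LINT x:{a<..<b}|lborel. w x / m * ln (w x / m))
      = (LINT x:{a<..<b}|lborel. c1 * ((p+1) * x powr p) + c2 * (x powr p * ln x))"
    using pt by (intro set_lebesgue_integral_cong) auto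
  also have "\<dots> = c1 * (LINT x:{a<..<b}|lborel. (p+1) * x powr p) + c2 * (LINT x:{a<..<b}|lborel. x powr p * ln x)"
    by (subst set_integral_add(2))
       (auto intro!: set_integrable_mult_right int_pow(1)[OF p a ab] int_powln(1)[OF p a ab b])
  also have "\<dots> = c1 * D + c2 * (E/(p+1) - D/(p+1)^2)"
    unfolding int_pow(2)[OF p a ab] int_powln(2)[OF p a ab b]
    by (simp add: D_def E_def A_def B_def diff_divide_distrib algebra_simps)
  finally have I: "(LINT x:{a<..<b}|lborel. w x / m * ln (w x / m)) = c1 * D + c2 * (E/(p+1) - D/(p+1)^2)" .
  have "avg (\<lambda>x. w x / avg w a b * ln (w x / avg w a b)) a b = (c1 * D + c2 * (E/(p+1) - D/(p+1)^2)) / h"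
    unfolding avgw unfolding avg_def Icc_Ioo I h_def ..
  also have "\<dots> = ln (p+1) - p/(p+1) + (p*E - D*ln m)/D"
    unfolding c1_def c2_def m_def using alg_value[OF Dp hp p] by simp
  finally show ?thesis by (simp add: E_def D_def m_def h_def A_def B_def)
qed

lemma lnpq: "x > 0 \<Longrightarrow> ln (x powr (p+1) / x) = p * ln (x::real)"
  by (simp add: ln_div ln_powr algebra_simps)

lemma key_ineq:
  fixes p a b :: real
  assumes p: "p > 0" and a: "0 \<le> a" and ab: "a < b"
  shows "p*(b powr (p+1) * ln b - a powr (p+1) * ln a)
      - (b powr (p+1) - a powr (p+1)) * ln ((b powr (p+1) - a powr (p+1))/(b-a)) \<le> 0"
proof (cases "a = 0")
  case True
  have "ln (b powr (p+1) / b) = p * ln b" using ab True by (intro lnpq) auto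
  then show ?thesis using True by simp
next
  case False
  then have a0: "a > 0" using a by auto
  have AB: "a powr (p+1) < b powr (p+1)" using p a ab by (intro powr_less_mono2) auto
  have l: "b powr (p+1) * ln (b powr (p+1) / b) \<le> a powr (p+1) * ln (a powr (p+1) / a)
     + (b powr (p+1) - a powr (p+1)) * ln ((b powr (p+1) - a powr (p+1))/(b-a))"
    using logsum[of "a powr (p+1)" "b powr (p+1) - a powr (p+1)" a "b - a"] a0 AB ab by simp
  have "ln (b powr (p+1) / b) = p * ln b" using a0 ab by (intro lnpq) auto
  moreover have "ln (a powr (p+1) / a) = p * ln a" using a0 by (intro lnpq) auto
  ultimately show ?thesis using l by (simp add: algebra_simps)
qed

theorem mainTheorem10:
  fixes Q \<gamma> :: real and w :: "real \<Rightarrow> real"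
  assumes "Q > 0"
    and "\<gamma> > 0" and "\<gamma> - ln \<gamma> = Q + 1"
    and "\<forall>t>0. t - ln t = Q + 1 \<longrightarrow> \<gamma> \<le> t"
    and "\<forall>t. w t = (1 / \<gamma>) * t powr ((1 - \<gamma>) / \<gamma>)"
  shows "RH1_01 w = ereal Q \<and>
         avg w 0 1 * exp (- avg (\<lambda>t. ln (w t)) 0 1) = \<gamma> * exp ((1 - \<gamma>) / \<gamma>)"
proof -
  have g0: "\<gamma> > 0" using assms(2) .
  have gne1: "\<gamma> \<noteq> 1" using assms(1,3) by auto
  have g1: "\<gamma> < 1"
  proof (rule ccontr)
    assume "\<not> \<gamma> < 1"
    then have gg: "\<gamma> > 1" using gne1 by auto
    define t0 where "t0 = exp (-(Q+1))"
    have t0p: "t0 > 0" by (simp add: t0_def)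
    have t01: "t0 \<le> 1" using assms(1) by (simp add: t0_def)
    have ht0: "t0 - ln t0 \<ge> Q + 1" using t0p by (simp add: t0_def)
    have h1: "1 - ln (1::real) \<le> Q + 1" using assms(1) by simp
    have cont: "continuous_on {t0..1} (\<lambda>t. t - ln t)"
      using t0p by (intro continuous_intros) auto
    obtain x where x: "x \<ge> t0" "x \<le> 1" "x - ln x = Q + 1"
      using IVT2'[of "\<lambda>t. t - ln t" 1 "Q+1" t0, OF h1 ht0 t01 cont] by blast
    have "\<gamma> \<le> x" using assms(4) x t0p by auto
    then show False using x gg by auto
  qed
  define p where "p = (1 - \<gamma>) / \<gamma>"
  have pp: "p > 0" using g0 g1 by (simp add: p_def)
  have p1: "p + 1 = 1 / \<gamma>" using g0 by (simp add: p_def field_simps)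
  have gam: "\<gamma> = 1 / (p + 1)" unfolding p1 by simp
  have wf: "w = (\<lambda>t. (p+1) * t powr p)"
    using assms(5) by (auto simp: p1 p_def[symmetric])
  have lnp1: "ln (p+1) = - ln \<gamma>" using g0 p1 by (simp add: ln_div)
  have pq: "p / (p+1) = 1 - \<gamma>" using g0 p1 by (simp add: p_def)
  have Qe: "Q = ln (p+1) - p / (p+1)" using assms(3) lnp1 pq by simp
  have part1: "RH1_01 w = ereal Q"
    unfolding RH1_01_def
  proof (rule antisym)
    show "(SUP ab \<in> {(a,b). 0 \<le> a \<and> a < b \<and> b \<le> 1}.
      ereal (avg (\<lambda>x. w x / avg w (fst ab) (snd ab) * ln (w x / avg w (fst ab) (snd ab)))
                 (fst ab) (snd ab))) \<le> ereal Q"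
    proof (rule SUP_least)
      fix ab assume "ab \<in> {(a,b). 0 \<le> (a::real) \<and> a < b \<and> b \<le> 1}"
      then obtain a b where ab: "ab = (a,b)" "0 \<le> a" "a < b" "b \<le> 1" by auto
      define D where "D = b powr (p+1) - a powr (p+1)"
      have Dp: "D > 0" unfolding D_def using pp ab by (simp add: powr_less_mono2)
      have K: "p*(b powr (p+1) * ln b - a powr (p+1) * ln a)
        - D * ln (D/(b-a)) \<le> 0" unfolding D_def using key_ineq[OF pp ab(2,3)] .
      have "avg (\<lambda>x. w x / avg w a b * ln (w x / avg w a b)) a b =
          Q + (p*(b powr (p+1) * ln b - a powr (p+1) * ln a) - D * ln (D/(b-a))) / D"
        unfolding wf Qe D_def using value_eq[OF pp ab(2,3,4)] by simp
      also have "\<dots> \<le> Q" using K Dp by (simp add: divide_nonpos_pos)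
      finally show "ereal (avg (\<lambda>x. w x / avg w (fst ab) (snd ab) * ln (w x / avg w (fst ab) (snd ab)))
                 (fst ab) (snd ab)) \<le> ereal Q" using ab by simp
    qed
  next
    have v: "avg (\<lambda>x. w x / avg w 0 1 * ln (w x / avg w 0 1)) 0 1 = Q"
      unfolding wf Qe using value_eq[OF pp, of 0 1] by simp
    show "ereal Q \<le> (SUP ab \<in> {(a,b). 0 \<le> a \<and> a < b \<and> b \<le> 1}.
      ereal (avg (\<lambda>x. w x / avg w (fst ab) (snd ab) * ln (w x / avg w (fst ab) (snd ab)))
                 (fst ab) (snd ab)))"
      apply (rule SUP_upper2[where i="(0::real,1::real)"])
       apply simp
      apply (simp only: fst_conv snd_conv v order_refl)
      done
  qed
  have aw: "avg w 0 1 = 1"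
    unfolding avg_def Icc_Ioo wf using int_pow(2)[OF pp, of 0 1] by simp
  have pt: "ln (w t) = ln (p+1) * 1 + p * ln t" if "t \<in> {0<..<1}" for t :: real
    using that pp by (simp add: wf ln_mult ln_powr)
  have "(LINT t:{0<..<1}|lborel. ln (w t)) = (LINT t:{0<..<1}|lborel. ln (p+1) * 1 + p * ln t)"
    using pt by (intro set_lebesgue_integral_cong) auto
  also have "\<dots> = ln (p+1) * (LINT t:{0<..<(1::real)}|lborel. (1::real)) + p * (LINT t:{0<..<1}|lborel. ln t)"
  proof -
    have I1: "set_integrable lborel {0<..<1} (\<lambda>t::real. ln (p+1) * (1::real))"
      by (rule set_integrable_mult_right[OF int_one(1)])
    have I2: "set_integrable lborel {0<..<1} (\<lambda>t::real. p * ln t)"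
      by (rule set_integrable_mult_right[OF int_ln(1)])
    show ?thesis
      by (simp only: set_integral_add(2)[OF I1 I2] set_integral_mult_right)
  qed
  also have "\<dots> = ln (p+1) - p" by (simp add: int_one(2) int_ln(2))
  finally have al: "avg (\<lambda>t. ln (w t)) 0 1 = ln (p+1) - p"
    unfolding avg_def Icc_Ioo by simp
  have "avg w 0 1 * exp (- avg (\<lambda>t. ln (w t)) 0 1) = exp p / (p+1)"
    unfolding aw al using pp by (simp add: exp_diff)
  also have "\<dots> = \<gamma> * exp ((1 - \<gamma>) / \<gamma>)"
  proof -
    have e: "(1 - \<gamma>) / \<gamma> = p" by (simp add: p_def)
    show ?thesis unfolding e by (subst gam) simp
  qed
  finally show ?thesis using part1 by simp
qed

end
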